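(* Let $X$ be a finite, simple, connected $3$-valent plane graph such that the number of edges surrounding each face is divisible by $3$. Then there exists an edge numbering $\nu\colon E(X)\to\{1,2,3\}$ such that, at every vertex $p\in V(X)$, the three edges having $p$ as an endpoint receive the numbers $1,2,3$ in this cyclic order with respect to the positive (counterclockwise) orientation around $p$. *)

theory Defs
  imports Main
begin

text \<open>A plane embedding is encoded combinatorially by a rotation system:
  rot v is the cyclic successor (counterclockwise) among the neighbours of v.\<close>

definition nbrs :: "'a set set \<Rightarrow> 'a \<Rightarrow> 'a set" where
  "nbrs E v = {u. {v, u} \<in> E}"

definition simple_graph :: "'a set \<Rightarrow> 'a set set \<Rightarrow> bool" where
  "simple_graph V E \<longleftrightarrow> finite V \<and>
     (\<forall>e\<in>E. \<exists>u v. u \<noteq> v \<and> u \<in> V \<and> v \<in> V \<and> e = {u, v})"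

definition cubic :: "'a set \<Rightarrow> 'a set set \<Rightarrow> bool" where
  "cubic V E \<longleftrightarrow> (\<forall>v\<in>V. card (nbrs E v) = 3)"

definition connected_graph :: "'a set \<Rightarrow> 'a set set \<Rightarrow> bool" where
  "connected_graph V E \<longleftrightarrow>
     (\<forall>u\<in>V. \<forall>v\<in>V. (u, v) \<in> {(x, y). {x, y} \<in> E}\<^sup>*)"

definition rotation_system :: "'a set \<Rightarrow> 'a set set \<Rightarrow> ('a \<Rightarrow> 'a \<Rightarrow> 'a) \<Rightarrow> bool" where
  "rotation_system V E rot \<longleftrightarrow>
     (\<forall>v\<in>V. bij_betw (rot v) (nbrs E v) (nbrs E v) \<and>
        (\<forall>u\<in>nbrs E v. \<forall>w\<in>nbrs E v. \<exists>k. (rot v ^^ k) u = w))"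

definition darts :: "'a set set \<Rightarrow> ('a \<times> 'a) set" where
  "darts E = {(u, v). {u, v} \<in> E}"

definition face_step :: "('a \<Rightarrow> 'a \<Rightarrow> 'a) \<Rightarrow> 'a \<times> 'a \<Rightarrow> 'a \<times> 'a" where
  "face_step rot d = (snd d, rot (snd d) (fst d))"

definition face_orbit :: "('a \<Rightarrow> 'a \<Rightarrow> 'a) \<Rightarrow> 'a \<times> 'a \<Rightarrow> ('a \<times> 'a) set" where
  "face_orbit rot d = {(face_step rot ^^ k) d | k. True}"

definition faces :: "'a set set \<Rightarrow> ('a \<Rightarrow> 'a \<Rightarrow> 'a) \<Rightarrow> ('a \<times> 'a) set set" where
  "faces E rot = face_orbit rot ` darts E"

text \<open>A connected graph with rotation system is a plane graph (the embedding
  is in the sphere/plane) iff Euler's formula V - E + F = 2 holds.\<close>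
definition plane_embedding :: "'a set \<Rightarrow> 'a set set \<Rightarrow> ('a \<Rightarrow> 'a \<Rightarrow> 'a) \<Rightarrow> bool" where
  "plane_embedding V E rot \<longleftrightarrow> rotation_system V E rot \<and>
     int (card V) - int (card E) + int (card (faces E rot)) = 2"

end

theory Submission
  imports Defs Complex_Main
begin


definition ecl :: "('b \<times> 'b) set \<Rightarrow> ('b \<times> 'b) set" where
  "ecl G = (G \<union> G\<inverse>)\<^sup>*"

definition ncls :: "'b set \<Rightarrow> ('b \<times> 'b) set \<Rightarrow> nat" where
  "ncls S G = card ((\<lambda>z. ecl G `` {z}) ` S)"

lemma ecl_refl[simp]: "(z, z) \<in> ecl G"
  by (simp add: ecl_def)

lemma ecl_sym: "(x, y) \<in> ecl G \<Longrightarrow> (y, x) \<in> ecl G"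
proof -
  have "sym (G \<union> G\<inverse>)" by (auto simp: sym_def)
  then have "sym (ecl G)" unfolding ecl_def by (rule sym_rtrancl)
  then show "(x, y) \<in> ecl G \<Longrightarrow> (y, x) \<in> ecl G" by (auto simp: sym_def)
qed

lemma ecl_trans: "(x, y) \<in> ecl G \<Longrightarrow> (y, z) \<in> ecl G \<Longrightarrow> (x, z) \<in> ecl G"
  unfolding ecl_def by (rule rtrancl_trans)

lemma ecl_base: "(x, y) \<in> G \<Longrightarrow> (x, y) \<in> ecl G"
  unfolding ecl_def by auto

lemma ecl_sub: assumes "G \<subseteq> ecl H" shows "ecl G \<subseteq> ecl H"
proof -
  have "G \<union> G\<inverse> \<subseteq> ecl H"
  proof
    fix p assume p: "p \<in> G \<union> G\<inverse>"
    obtain u v where uv: "p = (u, v)" by (cases p)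
    show "p \<in> ecl H"
    proof (cases "(u, v) \<in> G")
      case True then show ?thesis using assms uv by auto
    next
      case False
      then have "(v, u) \<in> G" using p uv by auto
      then have "(v, u) \<in> ecl H" using assms by auto
      then show ?thesis using uv ecl_sym by auto
    qed
  qed
  then have "(G \<union> G\<inverse>)\<^sup>* \<subseteq> (ecl H)\<^sup>*" by (rule rtrancl_mono)
  then show ?thesis unfolding ecl_def by simp
qed

lemma ecl_mono: assumes "G \<subseteq> H" shows "ecl G \<subseteq> ecl H"
proof (rule ecl_sub)
  show "G \<subseteq> ecl H"
  proof
    fix p assume "p \<in> G"
    then have "p \<in> H" using assms by auto
    then show "p \<in> ecl H" by (cases p) (simp add: ecl_base)
  qed
qed

lemma class_eq: assumes "(x, y) \<in> ecl G" shows "ecl G `` {x} = ecl G `` {y}"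
proof (intro equalityI subsetI)
  fix z assume "z \<in> ecl G `` {x}"
  then have "(x, z) \<in> ecl G" by simp
  then have "(y, z) \<in> ecl G" using ecl_trans[OF ecl_sym[OF assms]] by blast
  then show "z \<in> ecl G `` {y}" by simp
next
  fix z assume "z \<in> ecl G `` {y}"
  then have "(y, z) \<in> ecl G" by simp
  then have "(x, z) \<in> ecl G" using ecl_trans[OF assms] by blast
  then show "z \<in> ecl G `` {x}" by simp
qed

lemma ecl_cong: assumes "(u, v) \<in> ecl G" shows "(w, u) \<in> ecl G \<longleftrightarrow> (w, v) \<in> ecl G"
proof
  assume "(w, u) \<in> ecl G" then show "(w, v) \<in> ecl G" using assms by (rule ecl_trans)
next
  assume "(w, v) \<in> ecl G" then show "(w, u) \<in> ecl G" using ecl_sym[OF assms] by (rule ecl_trans)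
qed

lemma ncls_le:
  assumes "finite S" "ecl G \<subseteq> ecl H"
  shows "ncls S H \<le> ncls S G"
proof -
  have "(\<lambda>z. ecl H `` {z}) ` S = (\<lambda>C. ecl H `` C) ` ((\<lambda>z. ecl G `` {z}) ` S)"
  proof -
    have "ecl H `` (ecl G `` {z}) = ecl H `` {z}" for z
    proof
      show "ecl H `` (ecl G `` {z}) \<subseteq> ecl H `` {z}"
      proof
        fix w assume "w \<in> ecl H `` (ecl G `` {z})"
        then obtain u where u: "(z, u) \<in> ecl G" "(u, w) \<in> ecl H" by auto
        have "(z, u) \<in> ecl H" using u(1) assms(2) by auto
        then have "(z, w) \<in> ecl H" using u(2) by (rule ecl_trans)
        then show "w \<in> ecl H `` {z}" by simp
      qed
      show "ecl H `` {z} \<subseteq> ecl H `` (ecl G `` {z})" by auto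
    qed
    then show ?thesis by (simp add: image_image)
  qed
  then show ?thesis unfolding ncls_def using assms(1)
    by (metis card_image_le finite_imageI)
qed

lemma ncls_eq: "ecl G = ecl H \<Longrightarrow> ncls S G = ncls S H"
  by (simp add: ncls_def)

lemma ncls_id:
  assumes "G \<subseteq> Id" shows "ncls S G = card S"
proof -
  have "G \<union> G\<inverse> \<subseteq> Id" using assms by auto
  then have "ecl G \<subseteq> Id" unfolding ecl_def
    by (metis rtrancl__Id rtrancl_mono)
  then have "ecl G = Id" using ecl_refl by auto
  then have "(\<lambda>z. ecl G `` {z}) ` S = (\<lambda>z. {z}) ` S" by auto
  then show ?thesis unfolding ncls_def by (simp add: card_image)
qed

lemma ncls_merge:
  assumes fin: "finite S" and xS: "x \<in> S" and yS: "y \<in> S" and nr: "(x, y) \<notin> ecl G"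
  shows "ncls S G = ncls S (insert (x, y) G) + 1"
proof -
  define R where "R = ecl G"
  define Cx where "Cx = R `` {x}"
  define Cy where "Cy = R `` {y}"
  define U where "U = Cx \<union> Cy"
  define R' where "R' = R \<union> U \<times> U"
  define G' where "G' = insert (x, y) G"
  have clU: "u \<in> U \<longleftrightarrow> v \<in> U" if "(u, v) \<in> R" for u v
    using ecl_cong[of u v G x] ecl_cong[of u v G y] that unfolding U_def Cx_def Cy_def R_def by auto
  have RR: "R \<subseteq> ecl G'" unfolding R_def G'_def by (rule ecl_mono) auto
  have xy: "(x, y) \<in> ecl G'" unfolding G'_def by (rule ecl_base) auto
  have Ux: "(x, u) \<in> ecl G'" if "u \<in> U" for u
  proof -
    have "(x, u) \<in> R \<or> (y, u) \<in> R" using that unfolding U_def Cx_def Cy_def R_def by auto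
    then show ?thesis
    proof
      assume "(x, u) \<in> R" then show ?thesis using RR by auto
    next
      assume "(y, u) \<in> R" then have "(y, u) \<in> ecl G'" using RR by auto
      with xy show ?thesis by (rule ecl_trans)
    qed
  qed
  have R'sub: "R' \<subseteq> ecl G'"
  proof
    fix p assume p: "p \<in> R'"
    obtain u v where uv: "p = (u, v)" by (cases p)
    show "p \<in> ecl G'"
    proof (cases "(u, v) \<in> R")
      case True then show ?thesis using RR uv by auto
    next
      case False
      then have "u \<in> U" "v \<in> U" using p uv unfolding R'_def by auto
      then have xu: "(x, u) \<in> ecl G'" and xv: "(x, v) \<in> ecl G'" using Ux by simp_all
      have "(u, v) \<in> ecl G'" by (rule ecl_trans[OF ecl_sym[OF xu] xv])
      then show ?thesis using uv by simp
    qed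
  qed
  have R'trans: "(u, w) \<in> R'" if a: "(u, v) \<in> R'" "(v, w) \<in> R'" for u v w
  proof (cases "(u, v) \<in> R")
    case True
    show ?thesis
    proof (cases "(v, w) \<in> R")
      case True
      then have "(u, w) \<in> R" using \<open>(u, v) \<in> R\<close> unfolding R_def by (rule ecl_trans[rotated])
      then show ?thesis unfolding R'_def by auto
    next
      case False
      then have "v \<in> U" "w \<in> U" using a(2) unfolding R'_def by auto
      then show ?thesis using clU[OF True] unfolding R'_def by auto
    qed
  next
    case False
    then have "u \<in> U" "v \<in> U" using a(1) unfolding R'_def by auto
    show ?thesis
    proof (cases "(v, w) \<in> R")
      case True
      then have "w \<in> U" using clU \<open>v \<in> U\<close> by auto
      then show ?thesis using \<open>u \<in> U\<close> unfolding R'_def by auto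
    next
      case False
      then have "w \<in> U" using a(2) unfolding R'_def by auto
      then show ?thesis using \<open>u \<in> U\<close> unfolding R'_def by auto
    qed
  qed
  have "ecl G' \<subseteq> R'"
  proof -
    have "G' \<union> G'\<inverse> \<subseteq> R'"
    proof
      fix p assume p: "p \<in> G' \<union> G'\<inverse>"
      obtain u v where uv: "p = (u, v)" by (cases p)
      have xyU: "x \<in> U" "y \<in> U" unfolding U_def Cx_def Cy_def R_def by auto
      have "(u, v) \<in> G \<or> (v, u) \<in> G \<or> {u, v} \<subseteq> U" using p uv xyU unfolding G'_def by auto
      then show "p \<in> R'"
      proof (elim disjE)
        assume "(u, v) \<in> G" then have "(u, v) \<in> R" unfolding R_def by (rule ecl_base)
        then show ?thesis using uv unfolding R'_def by auto
      next
        assume "(v, u) \<in> G" then have "(v, u) \<in> R" unfolding R_def by (rule ecl_base)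
        then have "(u, v) \<in> R" unfolding R_def by (rule ecl_sym)
        then show ?thesis using uv unfolding R'_def by auto
      qed (use uv in \<open>auto simp: R'_def\<close>)
    qed
    moreover have "R'\<^sup>* \<subseteq> R'"
    proof
      fix p assume p: "p \<in> R'\<^sup>*"
      obtain u v where uv: "p = (u, v)" by (cases p)
      have "(u, v) \<in> R'\<^sup>* \<Longrightarrow> (u, v) \<in> R'"
      proof (induction rule: rtrancl_induct)
        case base then show ?case unfolding R'_def R_def by simp
      next
        case (step v w) from step.IH step.hyps(2) show ?case by (rule R'trans)
      qed
      then show "p \<in> R'" using p uv by simp
    qed
    ultimately show ?thesis unfolding ecl_def by (meson rtrancl_mono subset_trans)
  qed
  with R'sub have R'eq: "ecl G' = R'" by (rule equalityI[rotated])
  have cls': "ecl G' `` {z} = (if z \<in> U then U else R `` {z})" for z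
  proof -
    have "z \<in> U \<Longrightarrow> R `` {z} \<subseteq> U" using clU by blast
    then show ?thesis unfolding R'eq R'_def using clU by auto
  qed
  define K where "K = (\<lambda>z. R `` {z}) ` S"
  have K': "(\<lambda>z. ecl G' `` {z}) ` S = insert U (K - {Cx, Cy})"
  proof
    show "(\<lambda>z. ecl G' `` {z}) ` S \<subseteq> insert U (K - {Cx, Cy})"
    proof
      fix C assume "C \<in> (\<lambda>z. ecl G' `` {z}) ` S"
      then obtain z where z: "z \<in> S" "C = ecl G' `` {z}" by auto
      show "C \<in> insert U (K - {Cx, Cy})"
      proof (cases "z \<in> U")
        case True then show ?thesis using z cls' by simp
      next
        case False
        then have "R `` {z} \<noteq> Cx" "R `` {z} \<noteq> Cy"
          unfolding U_def Cx_def Cy_def R_def by auto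
        then show ?thesis using z cls' False unfolding K_def by auto
      qed
    qed
    show "insert U (K - {Cx, Cy}) \<subseteq> (\<lambda>z. ecl G' `` {z}) ` S"
    proof
      fix C assume C: "C \<in> insert U (K - {Cx, Cy})"
      show "C \<in> (\<lambda>z. ecl G' `` {z}) ` S"
      proof (cases "C = U")
        case True
        have "x \<in> U" unfolding U_def Cx_def R_def by auto
        then have "ecl G' `` {x} = C" using True cls' by simp
        then show ?thesis using xS by (rule image_eqI[OF sym])
      next
        case False
        then obtain z where z: "z \<in> S" "C = R `` {z}" "C \<noteq> Cx" "C \<noteq> Cy"
          using C unfolding K_def by auto
        have "z \<notin> U"
        proof
          assume "z \<in> U"
          then have "(x, z) \<in> R \<or> (y, z) \<in> R" unfolding U_def Cx_def Cy_def R_def by auto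
          then show False
          proof
            assume "(x, z) \<in> R" then have "Cx = R `` {z}" unfolding Cx_def R_def by (rule class_eq)
            then show False using z by simp
          next
            assume "(y, z) \<in> R" then have "Cy = R `` {z}" unfolding Cy_def R_def by (rule class_eq)
            then show False using z by simp
          qed
        qed
        then have "ecl G' `` {z} = C" using z cls' by simp
        then show ?thesis using z(1) by (rule image_eqI[OF sym])
      qed
    qed
  qed
  have finK: "finite K" unfolding K_def using fin by simp
  have CxK: "Cx \<in> K" "Cy \<in> K" unfolding K_def Cx_def Cy_def using xS yS by auto
  have neq: "Cx \<noteq> Cy"
  proof
    assume "Cx = Cy"
    then have "y \<in> Cx" unfolding Cy_def R_def by auto
    then show False using nr unfolding Cx_def R_def by auto
  qed
  have UK: "U \<notin> K - {Cx, Cy}"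
  proof
    assume "U \<in> K - {Cx, Cy}"
    then obtain z where z: "U = R `` {z}" "U \<noteq> Cx" by (auto simp: K_def)
    have "x \<in> U" unfolding U_def Cx_def R_def by auto
    then have "(z, x) \<in> R" using z by auto
    then have "R `` {z} = Cx" unfolding Cx_def R_def by (rule class_eq)
    then show False using z by auto
  qed
  have "card (insert U (K - {Cx, Cy})) = card K - 2 + 1"
    using finK CxK neq UK by (simp add: card_Diff_subset)
  moreover have "card K \<ge> 2"
  proof -
    have "{Cx, Cy} \<subseteq> K" using CxK by auto
    then have "card {Cx, Cy} \<le> card K" using finK by (rule card_mono[rotated])
    then show ?thesis using neq by simp
  qed
  ultimately show ?thesis unfolding ncls_def G'_def[symmetric] K' using K_def R_def by simp
qed


definition steps :: "'b set \<Rightarrow> ('b \<Rightarrow> 'b) \<Rightarrow> ('b \<times> 'b) set" where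
  "steps S f = {(z, f z) | z. z \<in> S}"

definition cyc :: "'b set \<Rightarrow> ('b \<Rightarrow> 'b) \<Rightarrow> nat" where
  "cyc S p = ncls S (steps S p)"

definition tr :: "'b \<Rightarrow> 'b \<Rightarrow> 'b \<Rightarrow> 'b" where
  "tr x y z = (if z = x then y else if z = y then x else z)"

lemma tr_tr[simp]: "tr x y (tr x y z) = z"
  by (simp add: tr_def)

lemma tr_in: "x \<in> S \<Longrightarrow> y \<in> S \<Longrightarrow> z \<in> S \<Longrightarrow> tr x y z \<in> S"
  by (simp add: tr_def)

lemma bij_tr: assumes "x \<in> S" "y \<in> S" shows "bij_betw (tr x y) S S"
  by (rule bij_betw_byWitness[where f' = "tr x y"]) (auto simp: tr_in assms)

lemma bij_comp_tr:
  assumes "bij_betw p S S" "x \<in> S" "y \<in> S"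
  shows "bij_betw (\<lambda>z. p (tr x y z)) S S"
proof -
  have "bij_betw (p \<circ> tr x y) S S" using bij_tr[OF assms(2,3)] assms(1) by (rule bij_betw_trans)
  then show ?thesis by (simp add: comp_def)
qed

lemma steps_in: "z \<in> S \<Longrightarrow> (z, f z) \<in> steps S f"
  by (auto simp: steps_def)

lemma steps_ecl: "z \<in> S \<Longrightarrow> (z, f z) \<in> ecl (steps S f)"
  by (rule ecl_base) (rule steps_in)

lemma iter_in: "bij_betw p S S \<Longrightarrow> x \<in> S \<Longrightarrow> (p ^^ k) x \<in> S"
  using bij_betw_funpow bij_betwE by metis

lemma iter_rel:
  assumes "bij_betw p S S" "x \<in> S"
  shows "(x, (p ^^ k) x) \<in> ecl (steps S p)"
proof (induction k)
  case 0 then show ?case by simp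
next
  case (Suc k)
  have "(p ^^ k) x \<in> S" using assms by (rule iter_in)
  then have "((p ^^ k) x, p ((p ^^ k) x)) \<in> ecl (steps S p)" by (rule steps_ecl)
  with Suc show ?case by (simp add: ecl_trans)
qed

lemma period_ex:
  assumes fin: "finite S" and bij: "bij_betw p S S" and x: "x \<in> S"
  shows "\<exists>n>0. (p ^^ n) x = x"
proof -
  let ?f = "\<lambda>k. (p ^^ k) x"
  have "?f ` {0..card S} \<subseteq> S" using iter_in[OF bij x] by auto
  then have "card (?f ` {0..card S}) \<le> card S" using fin by (rule card_mono[rotated])
  then have "card {0..card S} > card (?f ` {0..card S})" by simp
  then have "\<not> inj_on ?f {0..card S}" by (rule pigeonhole)
  then obtain i j where ij: "i \<noteq> j" "?f i = ?f j" unfolding inj_on_def by auto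
  define a where "a = min i j"
  define b where "b = max i j"
  have ab: "a < b" "?f a = ?f b" using ij by (auto simp: a_def b_def min_def max_def)
  have "(p ^^ a) ((p ^^ (b - a)) x) = (p ^^ a) x"
  proof -
    have "(p ^^ a) ((p ^^ (b - a)) x) = (p ^^ (a + (b - a))) x" by (simp add: funpow_add)
    also have "a + (b - a) = b" using ab by simp
    finally show ?thesis using ab by simp
  qed
  moreover have "inj_on (p ^^ a) S" using bij_betw_funpow[OF bij] by (rule bij_betw_imp_inj_on)
  moreover have "(p ^^ (b - a)) x \<in> S" using bij x by (rule iter_in)
  ultimately have "(p ^^ (b - a)) x = x" using x by (meson inj_onD)
  then show ?thesis using ab by (intro exI[of _ "b - a"]) simp
qed

definition per :: "('b \<Rightarrow> 'b) \<Rightarrow> 'b \<Rightarrow> nat" where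
  "per p x = (LEAST n. 0 < n \<and> (p ^^ n) x = x)"

lemma per_props:
  assumes "finite S" "bij_betw p S S" "x \<in> S"
  shows "0 < per p x" "(p ^^ per p x) x = x" "\<And>m. 0 < m \<Longrightarrow> m < per p x \<Longrightarrow> (p ^^ m) x \<noteq> x"
proof -
  obtain n where n: "0 < n \<and> (p ^^ n) x = x" using period_ex[OF assms] by auto
  show "0 < per p x" "(p ^^ per p x) x = x" unfolding per_def using LeastI[of "\<lambda>n. 0 < n \<and> (p ^^ n) x = x", OF n] by auto
  show "\<And>m. 0 < m \<Longrightarrow> m < per p x \<Longrightarrow> (p ^^ m) x \<noteq> x"
    unfolding per_def using not_less_Least by blast
qed

lemma per_distinct:
  assumes "finite S" "bij_betw p S S" "x \<in> S" "i < per p x" "j < per p x" "(p ^^ i) x = (p ^^ j) x"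
  shows "i = j"
proof -
  have "inj_on (\<lambda>k. (p ^^ k) x) {0..<per p x}"
    by (rule inj_on_funpow_least) (use per_props[OF assms(1-3)] in auto)
  then show ?thesis using assms(4-6) by (auto dest: inj_onD)
qed

lemma per_mod:
  assumes "finite S" "bij_betw p S S" "x \<in> S"
  shows "(p ^^ (k mod per p x)) x = (p ^^ k) x"
  by (rule funpow_mod_eq) (rule per_props(2)[OF assms])

lemma closed_set:
  assumes fin: "finite S" and bij: "bij_betw p S S" and T: "T \<subseteq> S" and cl: "\<And>z. z \<in> T \<Longrightarrow> p z \<in> T"
    and xT: "x \<in> T" and rel: "(x, y) \<in> ecl (steps S p)"
  shows "y \<in> T"
proof -
  have inj: "inj_on p S" using bij by (rule bij_betw_imp_inj_on)
  have finT: "finite T" using fin T by (rule finite_subset[rotated])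
  have pT: "p ` T = T"
    by (rule endo_inj_surj[OF finT]) (use cl inj T in \<open>auto intro: inj_on_subset\<close>)
  have "(x, y) \<in> (steps S p \<union> (steps S p)\<inverse>)\<^sup>*" using rel by (simp add: ecl_def)
  then show ?thesis
  proof (induction rule: rtrancl_induct)
    case base then show ?case by (rule xT)
  next
    case (step u w)
    from step.hyps(2) have "(u, w) \<in> steps S p \<or> (w, u) \<in> steps S p" by auto
    then show ?case
    proof
      assume "(u, w) \<in> steps S p"
      then have "w = p u" by (auto simp: steps_def)
      then show ?thesis using cl step.IH by simp
    next
      assume "(w, u) \<in> steps S p"
      then have wu: "u = p w" "w \<in> S" by (auto simp: steps_def)
      from step.IH pT obtain w' where w': "w' \<in> T" "u = p w'" by auto
      have "w' \<in> S" using w' T by auto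
      then have "w = w'" using inj wu w' by (metis inj_onD)
      then show ?thesis using w' by simp
    qed
  qed
qed

lemma rel_orbit:
  assumes fin: "finite S" and bij: "bij_betw p S S" and x: "x \<in> S" and rel: "(x, y) \<in> ecl (steps S p)"
  shows "\<exists>k. y = (p ^^ k) x"
proof -
  have "y \<in> {(p ^^ k) x | k. True}"
  proof (rule closed_set[OF fin bij _ _ _ rel])
    show "{(p ^^ k) x | k. True} \<subseteq> S" using iter_in[OF bij x] by auto
    show "x \<in> {(p ^^ k) x | k. True}" by (auto intro: exI[of _ 0])
    fix z assume "z \<in> {(p ^^ k) x | k. True}"
    then obtain k where "z = (p ^^ k) x" by auto
    then have "p z = (p ^^ Suc k) x" by simp
    then show "p z \<in> {(p ^^ k) x | k. True}" by blast
  qed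
  then show ?thesis by auto
qed


lemma tr_split:
  assumes fin: "finite S" and bij: "bij_betw p S S" and xS: "x \<in> S" and yS: "y \<in> S"
    and nr: "(x, y) \<notin> ecl (steps S p)"
  shows "(x, y) \<in> ecl (steps S (\<lambda>z. p (tr x y z)))"
proof -
  define q where "q = (\<lambda>z. p (tr x y z))"
  have bq: "bij_betw q S S" unfolding q_def using bij xS yS by (rule bij_comp_tr)
  define n where "n = per p y"
  have n: "0 < n" "(p ^^ n) y = y" "\<And>m. 0 < m \<Longrightarrow> m < n \<Longrightarrow> (p ^^ m) y \<noteq> y"
    unfolding n_def using per_props[OF fin bij yS] by auto
  have nx: "(p ^^ j) y \<noteq> x" for j
  proof
    assume "(p ^^ j) y = x"
    then have "(y, x) \<in> ecl (steps S p)" using iter_rel[OF bij yS, of j] by simp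
    then have "(x, y) \<in> ecl (steps S p)" by (rule ecl_sym)
    then show False using nr by simp
  qed
  have claim: "j < n \<Longrightarrow> (q ^^ j) (p y) = (p ^^ Suc j) y" for j
  proof (induction j)
    case 0 then show ?case by simp
  next
    case (Suc j)
    then have IH: "(q ^^ j) (p y) = (p ^^ Suc j) y" by simp
    define z where "z = (p ^^ Suc j) y"
    have "z \<noteq> x" unfolding z_def by (rule nx)
    moreover have "z \<noteq> y" unfolding z_def using n(3)[of "Suc j"] Suc.prems by simp
    ultimately have "q z = p z" by (simp add: q_def tr_def)
    then show ?case using IH by (simp add: z_def)
  qed
  have "(q ^^ (n - 1)) (p y) = y" using claim[of "n - 1"] n by simp
  moreover have "q x = p y" by (simp add: q_def tr_def)
  moreover have "(q ^^ n) x = (q ^^ (n - 1)) (q x)"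
  proof -
    have "n = Suc (n - 1)" using n by simp
    then have "q ^^ n = q ^^ (n - 1) \<circ> q" by (metis funpow_Suc_right)
    then show ?thesis by simp
  qed
  ultimately have "(q ^^ n) x = y" by simp
  then show ?thesis using iter_rel[OF bq xS, of n] by (simp add: q_def)
qed

lemma tr_merge:
  assumes fin: "finite S" and bij: "bij_betw p S S" and xS: "x \<in> S" and yS: "y \<in> S" and xy: "x \<noteq> y"
    and r: "(x, y) \<in> ecl (steps S p)"
  shows "(x, y) \<notin> ecl (steps S (\<lambda>z. p (tr x y z)))"
proof
  assume rq: "(x, y) \<in> ecl (steps S (\<lambda>z. p (tr x y z)))"
  define q where "q = (\<lambda>z. p (tr x y z))"
  have bq: "bij_betw q S S" unfolding q_def using bij xS yS by (rule bij_comp_tr)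
  obtain k where k: "y = (p ^^ k) x" using rel_orbit[OF fin bij xS r] by auto
  define n where "n = per p x"
  have n: "0 < n" "(p ^^ n) x = x" "\<And>m. 0 < m \<Longrightarrow> m < n \<Longrightarrow> (p ^^ m) x \<noteq> x"
    unfolding n_def using per_props[OF fin bij xS] by auto
  have dist: "i < n \<Longrightarrow> j < n \<Longrightarrow> (p ^^ i) x = (p ^^ j) x \<Longrightarrow> i = j" for i j
    unfolding n_def by (rule per_distinct[OF fin bij xS])
  define m where "m = k mod n"
  have ym: "y = (p ^^ m) x" unfolding m_def n_def using k per_mod[OF fin bij xS] by simp
  have mn: "m < n" unfolding m_def using n by simp
  have m0: "m \<noteq> 0"
  proof
    assume "m = 0" then have "y = x" using ym by simp
    then show False using xy by simp
  qed
  define T where "T = {(p ^^ i) x | i. i = 0 \<or> (m < i \<and> i < n)}"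
  have "y \<in> T"
  proof (rule closed_set[OF fin bq])
    show "T \<subseteq> S" unfolding T_def using iter_in[OF bij xS] by auto
    show "x \<in> T" unfolding T_def by (auto intro: exI[of _ 0])
    show "(x, y) \<in> ecl (steps S q)" using rq by (simp add: q_def)
    fix z assume "z \<in> T"
    then obtain i where i: "z = (p ^^ i) x" "i = 0 \<or> (m < i \<and> i < n)" unfolding T_def by auto
    have xT: "x \<in> T" unfolding T_def by (auto intro: exI[of _ 0])
    have nxt: "(p ^^ Suc i) x \<in> T" if "m < Suc i" "Suc i \<le> n" for i
    proof (cases "Suc i = n")
      case True then show ?thesis using n(2) xT by simp
    next
      case False then show ?thesis unfolding T_def using that by (intro CollectI exI[of _ "Suc i"]) auto
    qed
    show "q z \<in> T"
    proof (cases "i = 0")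
      case True
      then have "q z = p y" using i by (simp add: q_def tr_def)
      also have "\<dots> = (p ^^ Suc m) x" using ym by simp
      finally show ?thesis using nxt[of m] mn by simp
    next
      case False
      then have im: "m < i" "i < n" using i by auto
      have "z \<noteq> x"
      proof
        assume "z = x"
        then have "(p ^^ i) x = (p ^^ 0) x" using i by simp
        then show False using dist[of i 0] im n by simp
      qed
      moreover have "z \<noteq> y"
      proof
        assume "z = y"
        then have "(p ^^ i) x = (p ^^ m) x" using i ym by simp
        then show False using dist[of i m] im mn by simp
      qed
      ultimately have "q z = p z" by (simp add: q_def tr_def)
      then show ?thesis using i nxt[of i] im by simp
    qed
  qed
  then obtain i where i: "y = (p ^^ i) x" "i = 0 \<or> (m < i \<and> i < n)" unfolding T_def by auto
  then have "(p ^^ i) x = (p ^^ m) x" using ym by simp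
  then have "i = m" using dist[of i m] i mn n by auto
  then show False using i m0 by auto
qed

lemma steps_tr_sub:
  assumes xS: "x \<in> S" and yS: "y \<in> S"
  shows "steps S (\<lambda>z. p (tr x y z)) \<subseteq> ecl (insert (x, y) (steps S p))"
proof
  fix w assume "w \<in> steps S (\<lambda>z. p (tr x y z))"
  then obtain z where z: "z \<in> S" "w = (z, p (tr x y z))" by (auto simp: steps_def)
  have sub: "steps S p \<subseteq> insert (x, y) (steps S p)" by auto
  have st: "u \<in> S \<Longrightarrow> (u, p u) \<in> ecl (insert (x, y) (steps S p))" for u
    by (rule ecl_base) (auto simp: steps_def)
  have xy: "(x, y) \<in> ecl (insert (x, y) (steps S p))" by (rule ecl_base) simp
  show "w \<in> ecl (insert (x, y) (steps S p))"
  proof (cases "z = x")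
    case True
    then have "w = (x, p y)" using z by (simp add: tr_def)
    moreover have "(x, p y) \<in> ecl (insert (x, y) (steps S p))" using xy st[OF yS] by (rule ecl_trans)
    ultimately show ?thesis by simp
  next
    case False
    show ?thesis
    proof (cases "z = y")
      case True
      then have "w = (y, p x)" using z False by (simp add: tr_def)
      moreover have "(y, p x) \<in> ecl (insert (x, y) (steps S p))" using ecl_sym[OF xy] st[OF xS] by (rule ecl_trans)
      ultimately show ?thesis by simp
    next
      case False
      then have "w = (z, p z)" using z \<open>z \<noteq> x\<close> by (simp add: tr_def)
      then show ?thesis using st[OF z(1)] by simp
    qed
  qed
qed

lemma ecl_ins_eq:
  assumes "G \<subseteq> ecl (insert a H)" "H \<subseteq> ecl (insert a G)"
  shows "ecl (insert a G) = ecl (insert a H)"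
proof
  have "a \<in> ecl (insert a H)" by (cases a) (simp add: ecl_base)
  then show "ecl (insert a G) \<subseteq> ecl (insert a H)" using assms(1) by (intro ecl_sub) auto
  have "a \<in> ecl (insert a G)" by (cases a) (simp add: ecl_base)
  then show "ecl (insert a H) \<subseteq> ecl (insert a G)" using assms(2) by (intro ecl_sub) auto
qed

lemma ecl_absorb:
  assumes "a \<in> ecl G" shows "ecl (insert a G) = ecl G"
proof
  have "G \<subseteq> ecl G" by (auto intro: ecl_base)
  then show "ecl (insert a G) \<subseteq> ecl G" using assms by (intro ecl_sub) auto
  show "ecl G \<subseteq> ecl (insert a G)" by (rule ecl_mono) auto
qed

lemma tr_back: "(\<lambda>z. (\<lambda>z. p (tr x y z)) (tr x y z)) = p"
  by simp

lemma cyc_split: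
  assumes fin: "finite S" and bij: "bij_betw p S S" and xS: "x \<in> S" and yS: "y \<in> S"
    and nr: "(x, y) \<notin> ecl (steps S p)"
  shows "cyc S p = cyc S (\<lambda>z. p (tr x y z)) + 1"
proof -
  define q where "q = (\<lambda>z. p (tr x y z))"
  have "(x, y) \<in> ecl (steps S q)" unfolding q_def by (rule tr_split[OF assms])
  then have e1: "ecl (steps S q) = ecl (insert (x, y) (steps S q))" by (rule ecl_absorb[symmetric])
  have s1: "steps S q \<subseteq> ecl (insert (x, y) (steps S p))" unfolding q_def using xS yS by (rule steps_tr_sub)
  have s2: "steps S p \<subseteq> ecl (insert (x, y) (steps S q))"
    using steps_tr_sub[OF xS yS, of q] unfolding q_def by simp
  have e2: "ecl (insert (x, y) (steps S p)) = ecl (insert (x, y) (steps S q))" using s2 s1 by (rule ecl_ins_eq)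
  have "cyc S p = ncls S (insert (x, y) (steps S p)) + 1" unfolding cyc_def by (rule ncls_merge[OF fin xS yS nr])
  also have "ncls S (insert (x, y) (steps S p)) = ncls S (steps S q)" by (rule ncls_eq) (simp add: e1 e2)
  finally show ?thesis by (simp add: cyc_def q_def)
qed

lemma cyc_merge:
  assumes fin: "finite S" and bij: "bij_betw p S S" and xS: "x \<in> S" and yS: "y \<in> S" and xy: "x \<noteq> y"
    and r: "(x, y) \<in> ecl (steps S p)"
  shows "cyc S (\<lambda>z. p (tr x y z)) = cyc S p + 1"
proof -
  define q where "q = (\<lambda>z. p (tr x y z))"
  have bq: "bij_betw q S S" unfolding q_def using bij xS yS by (rule bij_comp_tr)
  have "(x, y) \<notin> ecl (steps S q)" unfolding q_def by (rule tr_merge[OF assms])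
  then have "cyc S q = cyc S (\<lambda>z. q (tr x y z)) + 1" by (rule cyc_split[OF fin bq xS yS])
  then show ?thesis by (simp add: q_def)
qed

lemma cyc_tr_le:
  assumes fin: "finite S" and bij: "bij_betw p S S" and xS: "x \<in> S" and yS: "y \<in> S" and xy: "x \<noteq> y"
  shows "cyc S (\<lambda>z. p (tr x y z)) \<le> cyc S p + 1"
proof (cases "(x, y) \<in> ecl (steps S p)")
  case True then show ?thesis using cyc_merge[OF assms True] by simp
next
  case False then show ?thesis using cyc_split[OF fin bij xS yS False] by simp
qed


lemma genus:
  assumes fin: "finite S"
  shows "bij_betw a S S \<Longrightarrow> bij_betw b S S \<Longrightarrow>
    cyc S a + cyc S b + cyc S (\<lambda>z. a (b z)) \<le> card S + 2 * ncls S (steps S a \<union> steps S b)"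
proof (induction "card {z \<in> S. b z \<noteq> z}" arbitrary: b rule: less_induct)
  case less
  note ba = less.prems(1) and bb = less.prems(2)
  show ?case
  proof (cases "{z \<in> S. b z \<noteq> z} = {}")
    case True
    then have bid: "z \<in> S \<Longrightarrow> b z = z" for z by auto
    have "steps S b \<subseteq> Id" using bid by (auto simp: steps_def)
    then have cb: "cyc S b = card S" unfolding cyc_def by (rule ncls_id)
    have sab: "steps S (\<lambda>z. a (b z)) = steps S a" using bid by (auto simp: steps_def)
    have "ecl (steps S a \<union> steps S b) = ecl (steps S a)"
    proof
      have "steps S a \<union> steps S b \<subseteq> ecl (steps S a)"
        using bid by (auto simp: steps_def intro: ecl_base)
      then show "ecl (steps S a \<union> steps S b) \<subseteq> ecl (steps S a)" by (rule ecl_sub)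
      show "ecl (steps S a) \<subseteq> ecl (steps S a \<union> steps S b)" by (rule ecl_mono) auto
    qed
    then have "ncls S (steps S a \<union> steps S b) = cyc S a" unfolding cyc_def by (rule ncls_eq)
    then show ?thesis using cb sab by (simp add: cyc_def)
  next
    case False
    then obtain x where xS: "x \<in> S" and bx: "b x \<noteq> x" by auto
    define y where "y = b x"
    have yS: "y \<in> S" unfolding y_def using bb xS by (rule bij_betw_apply)
    have xy: "x \<noteq> y" using bx by (simp add: y_def)
    define b' where "b' = (\<lambda>z. b (tr x y z))"
    have bb': "bij_betw b' S S" unfolding b'_def using bb xS yS by (rule bij_comp_tr)
    have b'y: "b' y = y" unfolding b'_def using xy by (simp add: tr_def y_def)
    have bback: "(\<lambda>z. b' (tr x y z)) = b" unfolding b'_def by simp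
    have by': "b y \<noteq> y"
    proof
      assume "b y = y"
      then have "b y = b x" by (simp add: y_def)
      then have "y = x" using bb xS yS by (metis bij_betw_imp_inj_on inj_onD)
      then show False using xy by simp
    qed
    have supp: "{z \<in> S. b' z \<noteq> z} \<subset> {z \<in> S. b z \<noteq> z}"
    proof
      show "{z \<in> S. b' z \<noteq> z} \<subseteq> {z \<in> S. b z \<noteq> z}"
      proof
        fix z assume z: "z \<in> {z \<in> S. b' z \<noteq> z}"
        show "z \<in> {z \<in> S. b z \<noteq> z}"
        proof (cases "z = x")
          case True then show ?thesis using z bx by simp
        next
          case False
          have "z \<noteq> y" using z b'y by auto
          then have "b' z = b z" using False by (simp add: b'_def tr_def)
          then show ?thesis using z by simp
        qed
      qed
      show "{z \<in> S. b' z \<noteq> z} \<noteq> {z \<in> S. b z \<noteq> z}" using b'y by' yS by blast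
    qed
    have lt: "card {z \<in> S. b' z \<noteq> z} < card {z \<in> S. b z \<noteq> z}"
      using supp fin by (intro psubset_card_mono) auto
    have IH: "cyc S a + cyc S b' + cyc S (\<lambda>z. a (b' z)) \<le> card S + 2 * ncls S (steps S a \<union> steps S b')"
      by (rule less.hyps[OF lt ba bb'])
    have nr': "(x, y) \<notin> ecl (steps S b')"
    proof
      assume "(x, y) \<in> ecl (steps S b')"
      then have yx: "(y, x) \<in> ecl (steps S b')" by (rule ecl_sym)
      have "x \<in> {y}" by (rule closed_set[OF fin bb' _ _ _ yx]) (use yS b'y in auto)
      then show False using xy by simp
    qed
    have cb: "cyc S b' = cyc S b + 1" using cyc_split[OF fin bb' xS yS nr'] bback by simp
    define ab' where "ab' = (\<lambda>z. a (b' z))"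
    have bab': "bij_betw ab' S S"
    proof -
      have "bij_betw (a \<circ> b') S S" using bb' ba by (rule bij_betw_trans)
      then show ?thesis by (simp add: ab'_def comp_def)
    qed
    have abback: "(\<lambda>z. ab' (tr x y z)) = (\<lambda>z. a (b z))" unfolding ab'_def b'_def by simp
    define G where "G = steps S a \<union> steps S b"
    define G' where "G' = steps S a \<union> steps S b'"
    have Gsub: "G \<subseteq> ecl (insert (x, y) G')"
    proof -
      have "steps S a \<subseteq> ecl (insert (x, y) G')" unfolding G'_def by (auto intro: ecl_base)
      moreover have "steps S b \<subseteq> ecl (insert (x, y) G')"
      proof -
        have "steps S b \<subseteq> ecl (insert (x, y) (steps S b'))"
          using steps_tr_sub[OF xS yS, of b'] bback by simp
        also have "\<dots> \<subseteq> ecl (insert (x, y) G')" unfolding G'_def by (rule ecl_mono) auto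
        finally show ?thesis .
      qed
      ultimately show ?thesis unfolding G_def by auto
    qed
    have G'sub: "G' \<subseteq> ecl (insert (x, y) G)"
    proof -
      have "steps S a \<subseteq> ecl (insert (x, y) G)" unfolding G_def by (auto intro: ecl_base)
      moreover have "steps S b' \<subseteq> ecl (insert (x, y) G)"
      proof -
        have "steps S b' \<subseteq> ecl (insert (x, y) (steps S b))"
          unfolding b'_def by (rule steps_tr_sub[OF xS yS])
        also have "\<dots> \<subseteq> ecl (insert (x, y) G)" unfolding G_def by (rule ecl_mono) auto
        finally show ?thesis .
      qed
      ultimately show ?thesis unfolding G'_def by auto
    qed
    have xyG: "(x, y) \<in> ecl G"
    proof -
      have "(x, y) \<in> steps S b" unfolding y_def using xS by (rule steps_in)
      then show ?thesis unfolding G_def by (intro ecl_base) auto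
    qed
    show ?thesis
    proof (cases "(x, y) \<in> ecl G'")
      case True
      have "ecl G' = ecl (insert (x, y) G')" using True by (rule ecl_absorb[symmetric])
      also have "\<dots> = ecl (insert (x, y) G)" using G'sub Gsub by (rule ecl_ins_eq)
      also have "\<dots> = ecl G" using xyG by (rule ecl_absorb)
      finally have "ncls S G' = ncls S G" by (rule ncls_eq)
      moreover have "cyc S (\<lambda>z. a (b z)) \<le> cyc S ab' + 1"
        using cyc_tr_le[OF fin bab' xS yS xy] abback by simp
      ultimately show ?thesis using IH cb unfolding G_def G'_def ab'_def by simp
    next
      case False
      have "steps S ab' \<subseteq> ecl G'"
      proof
        fix w assume "w \<in> steps S ab'"
        then obtain z where z: "z \<in> S" "w = (z, a (b' z))" by (auto simp: steps_def ab'_def)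
        have "(z, b' z) \<in> ecl G'" unfolding G'_def using steps_in[OF z(1), of b'] by (intro ecl_base) auto
        moreover have "b' z \<in> S" using bb' z(1) by (rule bij_betw_apply)
        then have "(b' z, a (b' z)) \<in> ecl G'" unfolding G'_def using steps_in[of "b' z" S a] by (intro ecl_base) auto
        ultimately have "(z, a (b' z)) \<in> ecl G'" by (rule ecl_trans)
        then show "w \<in> ecl G'" using z by simp
      qed
      then have "ecl (steps S ab') \<subseteq> ecl G'" by (rule ecl_sub)
      then have nr2: "(x, y) \<notin> ecl (steps S ab')" using False by auto
      have cab: "cyc S ab' = cyc S (\<lambda>z. a (b z)) + 1"
        using cyc_split[OF fin bab' xS yS nr2] abback by simp
      have "ncls S G' = ncls S (insert (x, y) G') + 1" by (rule ncls_merge[OF fin xS yS False])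
      moreover have "ncls S (insert (x, y) G') \<le> ncls S G"
        using fin ecl_sub[OF Gsub] by (rule ncls_le)
      ultimately have "ncls S G' \<le> ncls S G + 1" by simp
      then show ?thesis using IH cb cab unfolding G_def G'_def ab'_def by simp
    qed
  qed
qed


lemma sum_orbits:
  assumes fin: "finite A" and self: "\<And>x. x \<in> A \<Longrightarrow> x \<in> Orb x"
    and sub: "\<And>x. x \<in> A \<Longrightarrow> Orb x \<subseteq> A"
    and eq: "\<And>x y. x \<in> A \<Longrightarrow> y \<in> Orb x \<Longrightarrow> Orb y = Orb x"
  shows "(\<Sum>x\<in>A. 1 / real (card (Orb x))) = real (card (Orb ` A))"
proof -
  have "(\<Sum>x\<in>A. 1 / real (card (Orb x))) = (\<Sum>C\<in>Orb ` A. \<Sum>x\<in>{x \<in> A. Orb x = C}. 1 / real (card (Orb x)))"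
    using fin by (rule sum.image_gen)
  also have "\<dots> = (\<Sum>C\<in>Orb ` A. (1::real))"
  proof (rule sum.cong[OF refl])
    fix C assume "C \<in> Orb ` A"
    then obtain x0 where x0: "x0 \<in> A" "C = Orb x0" by auto
    have set: "{x \<in> A. Orb x = C} = C"
    proof
      show "{x \<in> A. Orb x = C} \<subseteq> C" using self by auto
      show "C \<subseteq> {x \<in> A. Orb x = C}"
      proof
        fix x assume "x \<in> C"
        then have xo: "x \<in> Orb x0" using x0 by simp
        then have "x \<in> A" using sub[OF x0(1)] by blast
        moreover have "Orb x = Orb x0" by (rule eq[OF x0(1) xo])
        ultimately show "x \<in> {x \<in> A. Orb x = C}" using x0 by simp
      qed
    qed
    have finC: "finite C" using x0 sub fin by (meson finite_subset)
    have "C \<noteq> {}" using x0 self by auto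
    then have cpos: "card C > 0" using finC by (simp add: card_gt_0_iff)
    have "(\<Sum>x\<in>{x \<in> A. Orb x = C}. 1 / real (card (Orb x))) = (\<Sum>x\<in>C. 1 / real (card C))"
      by (rule sum.cong) (use set in auto)
    also have "\<dots> = 1" using cpos by simp
    finally show "(\<Sum>x\<in>{x \<in> A. Orb x = C}. 1 / real (card (Orb x))) = 1" .
  qed
  also have "\<dots> = real (card (Orb ` A))" by simp
  finally show ?thesis .
qed

lemma cyc_lower:
  assumes fin: "finite S" and bij: "bij_betw p S S"
    and Tex: "\<And>z. z \<in> S \<Longrightarrow> \<exists>T. T \<subseteq> S \<and> z \<in> T \<and> (\<forall>w\<in>T. p w \<in> T) \<and> card T \<le> m z"
    and mpos: "\<And>z. z \<in> S \<Longrightarrow> 0 < m z"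
  shows "(\<Sum>z\<in>S. 1 / real (m z)) \<le> real (cyc S p)"
proof -
  define cls where "cls z = ecl (steps S p) `` {z}" for z
  have pS: "\<And>w. w \<in> S \<Longrightarrow> p w \<in> S" using bij by (rule bij_betw_apply)
  have clsS: "cls z \<subseteq> S" if "z \<in> S" for z
  proof
    fix w assume "w \<in> cls z"
    then have "(z, w) \<in> ecl (steps S p)" by (simp add: cls_def)
    then show "w \<in> S" using closed_set[OF fin bij _ pS that] by blast
  qed
  have "real (cyc S p) = (\<Sum>z\<in>S. 1 / real (card (cls z)))"
  proof -
    have "(\<Sum>z\<in>S. 1 / real (card (cls z))) = real (card (cls ` S))"
    proof (rule sum_orbits[OF fin])
      show "z \<in> cls z" for z by (simp add: cls_def)
      show "z \<in> S \<Longrightarrow> cls z \<subseteq> S" for z by (rule clsS)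
      show "cls y = cls x" if "y \<in> cls x" for x y
        using that class_eq[of x y "steps S p"] by (simp add: cls_def)
    qed
    then show ?thesis by (simp add: cyc_def ncls_def cls_def)
  qed
  moreover have "(\<Sum>z\<in>S. 1 / real (m z)) \<le> (\<Sum>z\<in>S. 1 / real (card (cls z)))"
  proof (rule sum_mono)
    fix z assume z: "z \<in> S"
    obtain T where T: "T \<subseteq> S" "z \<in> T" "\<forall>w\<in>T. p w \<in> T" "card T \<le> m z" using Tex[OF z] by blast
    have "cls z \<subseteq> T"
    proof
      fix w assume "w \<in> cls z"
      then have "(z, w) \<in> ecl (steps S p)" by (simp add: cls_def)
      moreover have clT: "\<And>w. w \<in> T \<Longrightarrow> p w \<in> T" using T(3) by blast
      ultimately show "w \<in> T" using closed_set[OF fin bij T(1) clT T(2)] by blast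
    qed
    moreover have "finite T" using T(1) fin by (rule finite_subset)
    ultimately have "card (cls z) \<le> card T" by (rule card_mono[rotated])
    then have c1: "card (cls z) \<le> m z" using T(4) by simp
    have "z \<in> cls z" by (simp add: cls_def)
    moreover have "finite (cls z)" using clsS[OF z] fin by (rule finite_subset)
    ultimately have c2: "0 < card (cls z)" by (auto simp: card_gt_0_iff)
    show "1 / real (m z) \<le> 1 / real (card (cls z))"
      using c1 c2 by (simp add: frac_le)
  qed
  ultimately show ?thesis by simp
qed


definition sg :: "('a \<Rightarrow> 'a \<Rightarrow> 'a) \<Rightarrow> 'a \<times> 'a \<Rightarrow> 'a \<times> 'a" where
  "sg rot d = (fst d, rot (fst d) (snd d))"

definition th :: "'a \<times> 'a \<Rightarrow> 'a \<times> 'a" where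
  "th d = (snd d, fst d)"

lemma face_step_eq: "face_step rot = (\<lambda>d. sg rot (th d))"
  by (auto simp: face_step_def sg_def th_def)

lemma darts_iff: "(u, v) \<in> darts E \<longleftrightarrow> {u, v} \<in> E"
  by (simp add: darts_def)

locale cplane =
  fixes V :: "'a set" and E :: "'a set set" and rot :: "'a \<Rightarrow> 'a \<Rightarrow> 'a"
  assumes sgr: "simple_graph V E"
    and cn: "connected_graph V E"
    and cb: "cubic V E"
    and pe: "plane_embedding V E rot"
    and f3: "\<forall>F\<in>faces E rot. 3 dvd card F"
begin

lemma rs: "rotation_system V E rot" using pe by (simp add: plane_embedding_def)

lemma euler: "int (card V) - int (card E) + int (card (faces E rot)) = 2"
  using pe by (simp add: plane_embedding_def)

lemma finV: "finite V" using sgr by (simp add: simple_graph_def)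

lemma edge_form: "e \<in> E \<Longrightarrow> \<exists>u v. u \<noteq> v \<and> u \<in> V \<and> v \<in> V \<and> e = {u, v}"
  using sgr by (simp add: simple_graph_def)

lemma dart_V: assumes "(u, v) \<in> darts E" shows "u \<in> V" "v \<in> V" "u \<noteq> v"
proof -
  have "{u, v} \<in> E" using assms by (simp add: darts_iff)
  then obtain a b where ab: "a \<noteq> b" "a \<in> V" "b \<in> V" "{u, v} = {a, b}" using edge_form by blast
  then show "u \<in> V" "v \<in> V" by (auto simp: doubleton_eq_iff)
  show "u \<noteq> v" using ab by (auto simp: doubleton_eq_iff)
qed

lemma D_Sigma: "darts E = Sigma V (nbrs E)"
proof
  show "darts E \<subseteq> Sigma V (nbrs E)"
  proof
    fix d assume d: "d \<in> darts E"
    obtain u v where uv: "d = (u, v)" by (cases d)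
    have "u \<in> V" using d uv dart_V by auto
    moreover have "v \<in> nbrs E u" using d uv by (simp add: darts_iff nbrs_def)
    ultimately show "d \<in> Sigma V (nbrs E)" using uv by simp
  qed
  show "Sigma V (nbrs E) \<subseteq> darts E" by (auto simp: darts_iff nbrs_def)
qed

lemma nbrs_card: "p \<in> V \<Longrightarrow> card (nbrs E p) = 3" using cb by (simp add: cubic_def)

lemma finN: "p \<in> V \<Longrightarrow> finite (nbrs E p)"
  using nbrs_card by (metis card.infinite zero_neq_numeral)

lemma finD: "finite (darts E)"
  unfolding D_Sigma using finV finN by (rule finite_SigmaI)

lemma nbrs_dart: "u \<in> nbrs E p \<longleftrightarrow> (p, u) \<in> darts E"
  by (simp add: nbrs_def darts_iff)

lemma rot_bij: "p \<in> V \<Longrightarrow> bij_betw (rot p) (nbrs E p) (nbrs E p)"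
  using rs by (simp add: rotation_system_def)

lemma rot_trans: "p \<in> V \<Longrightarrow> u \<in> nbrs E p \<Longrightarrow> w \<in> nbrs E p \<Longrightarrow> \<exists>k. (rot p ^^ k) u = w"
  using rs by (simp add: rotation_system_def)

lemma rot_in: "p \<in> V \<Longrightarrow> u \<in> nbrs E p \<Longrightarrow> rot p u \<in> nbrs E p"
  using rot_bij bij_betw_apply by metis

lemma sg_in: "d \<in> darts E \<Longrightarrow> sg rot d \<in> darts E"
  using rot_in unfolding D_Sigma sg_def by auto

lemma th_in: "d \<in> darts E \<Longrightarrow> th d \<in> darts E"
  by (cases d) (simp add: th_def darts_iff insert_commute)

lemma bij_th: "bij_betw th (darts E) (darts E)"
  by (rule bij_betw_byWitness[where f' = th]) (auto simp: th_def darts_iff insert_commute)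

lemma bij_sg: "bij_betw (sg rot) (darts E) (darts E)"
proof (rule bij_betw_imageI)
  show "inj_on (sg rot) (darts E)"
  proof (rule inj_onI)
    fix d d' assume d: "d \<in> darts E" "d' \<in> darts E" "sg rot d = sg rot d'"
    obtain p u where pu: "d = (p, u)" by (cases d)
    obtain p' u' where pu': "d' = (p', u')" by (cases d')
    have pp: "p = p'" and r: "rot p u = rot p u'" using d(3) pu pu' by (auto simp: sg_def)
    have "p \<in> V" "u \<in> nbrs E p" "u' \<in> nbrs E p" using d pu pu' pp unfolding D_Sigma by auto
    then have "u = u'" using r rot_bij by (metis bij_betw_imp_inj_on inj_onD)
    then show "d = d'" using pu pu' pp by simp
  qed
  show "sg rot ` darts E = darts E"
  proof
    show "sg rot ` darts E \<subseteq> darts E" using sg_in by auto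
    show "darts E \<subseteq> sg rot ` darts E"
    proof
      fix d assume d: "d \<in> darts E"
      obtain p w where pw: "d = (p, w)" by (cases d)
      have p: "p \<in> V" "w \<in> nbrs E p" using d pw unfolding D_Sigma by auto
      then have "w \<in> rot p ` nbrs E p" using rot_bij[OF p(1)] by (simp add: bij_betw_def)
      then obtain u where u: "u \<in> nbrs E p" "w = rot p u" by auto
      then have "(p, u) \<in> darts E" "sg rot (p, u) = d" using p pw unfolding D_Sigma by (auto simp: sg_def)
      then show "d \<in> sg rot ` darts E" by (metis image_eqI)
    qed
  qed
qed

lemma bij_fs: "bij_betw (face_step rot) (darts E) (darts E)"
proof -
  have "bij_betw (sg rot \<circ> th) (darts E) (darts E)" using bij_th bij_sg by (rule bij_betw_trans)
  then show ?thesis by (simp add: face_step_eq comp_def)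
qed

lemma rot3: assumes p: "p \<in> V" and u: "u \<in> nbrs E p" shows "(rot p ^^ 3) u = u"
proof -
  let ?N = "nbrs E p"
  have fin: "finite ?N" using p by (rule finN)
  have bij: "bij_betw (rot p) ?N ?N" using p by (rule rot_bij)
  define n where "n = per (rot p) u"
  have n: "0 < n" "(rot p ^^ n) u = u" "\<And>m. 0 < m \<Longrightarrow> m < n \<Longrightarrow> (rot p ^^ m) u \<noteq> u"
    unfolding n_def using per_props[OF fin bij u] by auto
  have inj: "inj_on (\<lambda>k. (rot p ^^ k) u) {0..<n}" by (rule inj_on_funpow_least) (use n in auto)
  have img: "(\<lambda>k. (rot p ^^ k) u) ` {0..<n} = ?N"
  proof
    show "(\<lambda>k. (rot p ^^ k) u) ` {0..<n} \<subseteq> ?N" using iter_in[OF bij u] by auto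
    show "?N \<subseteq> (\<lambda>k. (rot p ^^ k) u) ` {0..<n}"
    proof
      fix w assume "w \<in> ?N"
      then obtain k where k: "(rot p ^^ k) u = w" using rot_trans[OF p u] by blast
      have "(rot p ^^ (k mod n)) u = w" using k per_mod[OF fin bij u] by (simp add: n_def)
      moreover have "k mod n \<in> {0..<n}" using n by simp
      ultimately show "w \<in> (\<lambda>k. (rot p ^^ k) u) ` {0..<n}" by (metis image_eqI)
    qed
  qed
  have "card ?N = n" using card_image[OF inj] img by simp
  then have "n = 3" using nbrs_card[OF p] by simp
  then show ?thesis using n by simp
qed

lemma sg3: assumes "d \<in> darts E" shows "sg rot (sg rot (sg rot d)) = d"
proof -
  obtain p u where pu: "d = (p, u)" by (cases d)
  have p: "p \<in> V" "u \<in> nbrs E p" using assms pu unfolding D_Sigma by auto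
  have "(rot p ^^ 3) u = u" using p by (rule rot3)
  then have "rot p (rot p (rot p u)) = u" by (simp add: numeral_3_eq_3)
  then show ?thesis using pu by (simp add: sg_def)
qed

lemma finE: "finite E"
proof -
  have "E \<subseteq> Pow V" using edge_form by blast
  then show ?thesis using finV by (meson finite_Pow_iff finite_subset)
qed

lemma card_DV: "card (darts E) = 3 * card V"
proof -
  have "card (darts E) = (\<Sum>p\<in>V. card (nbrs E p))" unfolding D_Sigma
    using finV finN by (simp add: card_SigmaI)
  also have "\<dots> = (\<Sum>p\<in>V. 3)" using nbrs_card by simp
  finally show ?thesis by simp
qed

lemma card_DE: "card (darts E) = 2 * card E"
proof -
  define ed where "ed d = {fst d, snd d}" for d :: "'a \<times> 'a"
  have img: "ed ` darts E = E"
  proof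
    show "ed ` darts E \<subseteq> E" by (auto simp: ed_def darts_def)
    show "E \<subseteq> ed ` darts E"
    proof
      fix e assume "e \<in> E"
      then obtain u v where "e = {u, v}" "u \<noteq> v" using edge_form by blast
      then have "(u, v) \<in> darts E" "ed (u, v) = e" using \<open>e \<in> E\<close> by (auto simp: darts_iff ed_def)
      then show "e \<in> ed ` darts E" by (metis image_eqI)
    qed
  qed
  have "card (darts E) = (\<Sum>d\<in>darts E. 1)" by simp
  also have "\<dots> = (\<Sum>e\<in>ed ` darts E. \<Sum>d\<in>{d \<in> darts E. ed d = e}. 1)"
    using finD by (rule sum.image_gen)
  also have "\<dots> = (\<Sum>e\<in>E. 2)"
  proof (rule sum.cong)
    show "ed ` darts E = E" by (rule img)
    fix e assume "e \<in> E"
    then obtain u v where uv: "e = {u, v}" "u \<noteq> v" using edge_form by blast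
    have "{d \<in> darts E. ed d = e} = {(u, v), (v, u)}"
    proof
      show "{d \<in> darts E. ed d = e} \<subseteq> {(u, v), (v, u)}"
        using uv by (auto simp: ed_def doubleton_eq_iff)
      show "{(u, v), (v, u)} \<subseteq> {d \<in> darts E. ed d = e}"
        using uv \<open>e \<in> E\<close> by (auto simp: ed_def darts_iff insert_commute)
    qed
    then show "(\<Sum>d\<in>{d \<in> darts E. ed d = e}. 1) = 2" using uv by simp
  qed
  finally show ?thesis by simp
qed

lemma face_orbit_eq: "face_orbit rot d = {(face_step rot ^^ k) d | k. True}"
  by (simp add: face_orbit_def)

lemma face_per:
  assumes d: "d \<in> darts E"
  shows "card (face_orbit rot d) = per (face_step rot) d"
    "(face_step rot ^^ card (face_orbit rot d)) d = d"
    "face_orbit rot d \<subseteq> darts E"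
proof -
  let ?f = "face_step rot"
  define n where "n = per ?f d"
  have n: "0 < n" "(?f ^^ n) d = d" "\<And>m. 0 < m \<Longrightarrow> m < n \<Longrightarrow> (?f ^^ m) d \<noteq> d"
    unfolding n_def using per_props[OF finD bij_fs d] by auto
  have inj: "inj_on (\<lambda>k. (?f ^^ k) d) {0..<n}" by (rule inj_on_funpow_least) (use n in auto)
  have img: "(\<lambda>k. (?f ^^ k) d) ` {0..<n} = face_orbit rot d"
  proof
    show "(\<lambda>k. (?f ^^ k) d) ` {0..<n} \<subseteq> face_orbit rot d" unfolding face_orbit_eq by auto
    show "face_orbit rot d \<subseteq> (\<lambda>k. (?f ^^ k) d) ` {0..<n}"
    proof
      fix w assume "w \<in> face_orbit rot d"
      then obtain k where k: "(?f ^^ k) d = w" unfolding face_orbit_eq by blast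
      have "(?f ^^ (k mod n)) d = w" using k per_mod[OF finD bij_fs d] by (simp add: n_def)
      moreover have "k mod n \<in> {0..<n}" using n by simp
      ultimately show "w \<in> (\<lambda>k. (?f ^^ k) d) ` {0..<n}" by (metis image_eqI)
    qed
  qed
  show c: "card (face_orbit rot d) = per ?f d" using card_image[OF inj] img by (simp add: n_def)
  show "(?f ^^ card (face_orbit rot d)) d = d" using c n(2) by (simp add: n_def)
  show "face_orbit rot d \<subseteq> darts E" unfolding face_orbit_eq using iter_in[OF bij_fs d] by auto
qed

lemma face_orbit_same:
  assumes x: "x \<in> darts E" and y: "y \<in> face_orbit rot x"
  shows "face_orbit rot y = face_orbit rot x"
proof -
  let ?f = "face_step rot"
  obtain k where k: "y = (?f ^^ k) x" using y unfolding face_orbit_eq by blast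
  define n where "n = per ?f x"
  have n: "0 < n" "(?f ^^ n) x = x" unfolding n_def using per_props[OF finD bij_fs x] by auto
  have "(?f ^^ ((n * k) mod n)) x = (?f ^^ (n * k)) x" by (rule funpow_mod_eq) (rule n(2))
  then have xx: "(?f ^^ (n * k)) x = x" by simp
  have kle: "k \<le> n * k" using n(1) by simp
  have xy: "x = (?f ^^ (n * k - k)) y"
  proof -
    have "(?f ^^ (n * k - k)) y = (?f ^^ (n * k - k + k)) x" using k by (simp add: funpow_add)
    also have "n * k - k + k = n * k" using kle by simp
    finally show ?thesis using xx by simp
  qed
  show ?thesis
  proof
    show "face_orbit rot y \<subseteq> face_orbit rot x"
    proof
      fix w assume "w \<in> face_orbit rot y"
      then obtain j where "w = (?f ^^ j) y" unfolding face_orbit_eq by blast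
      then have "w = (?f ^^ (j + k)) x" using k by (simp add: funpow_add)
      then show "w \<in> face_orbit rot x" unfolding face_orbit_eq by blast
    qed
    show "face_orbit rot x \<subseteq> face_orbit rot y"
    proof
      fix w assume "w \<in> face_orbit rot x"
      then obtain j where "w = (?f ^^ j) x" unfolding face_orbit_eq by blast
      then have "w = (?f ^^ (j + (n * k - k))) y" using xy by (metis funpow_add comp_apply)
      then show "w \<in> face_orbit rot y" unfolding face_orbit_eq by blast
    qed
  qed
qed

lemma faces_sum: "(\<Sum>d\<in>darts E. 1 / real (card (face_orbit rot d))) = real (card (faces E rot))"
proof -
  have "(\<Sum>d\<in>darts E. 1 / real (card (face_orbit rot d))) = real (card (face_orbit rot ` darts E))"
  proof (rule sum_orbits[OF finD])
    show "x \<in> face_orbit rot x" for x unfolding face_orbit_eq by (auto intro: exI[of _ 0])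
    show "x \<in> darts E \<Longrightarrow> face_orbit rot x \<subseteq> darts E" for x by (rule face_per(3))
    show "x \<in> darts E \<Longrightarrow> y \<in> face_orbit rot x \<Longrightarrow> face_orbit rot y = face_orbit rot x" for x y
      by (rule face_orbit_same)
  qed
  then show ?thesis by (simp add: faces_def)
qed

lemma face3: "d \<in> darts E \<Longrightarrow> 3 dvd card (face_orbit rot d)"
  using f3 by (auto simp: faces_def)

end


datatype z3 = Z0 | Z1 | Z2

fun sc :: "z3 \<Rightarrow> z3" where
  "sc Z0 = Z1" | "sc Z1 = Z2" | "sc Z2 = Z0"

fun hv :: "z3 \<Rightarrow> nat" where
  "hv Z0 = 1" | "hv Z1 = 2" | "hv Z2 = 3"

lemma sc3[simp]: "sc (sc (sc i)) = i" by (cases i) auto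

lemma sc_inj: "sc i = sc j \<Longrightarrow> i = j" by (cases i; cases j) auto

lemma hv_sc: "hv (sc i) = hv i mod 3 + 1" by (cases i) auto

lemma hv_range: "hv i \<in> {1, 2, 3}" by (cases i) auto

lemma UNIV_z3: "(UNIV :: z3 set) = {Z0, Z1, Z2}"
  using z3.exhaust by auto

lemma card_z3: "card (UNIV :: z3 set) = 3" unfolding UNIV_z3 by simp

lemma fin_z3: "finite (UNIV :: z3 set)" unfolding UNIV_z3 by simp

lemma sc_pow3: "(sc ^^ 3) i = i" by (simp add: numeral_3_eq_3)

lemma sc_reach: "\<exists>s. (sc ^^ s) m = l"
proof -
  have "l = m \<or> l = sc m \<or> l = sc (sc m)" by (cases m; cases l) auto
  moreover have "(sc ^^ 0) m = m" "(sc ^^ 1) m = sc m" "(sc ^^ 2) m = sc (sc m)"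
    by (simp_all add: numeral_2_eq_2)
  ultimately show ?thesis by metis
qed

lemma z3_two: "i \<noteq> j \<Longrightarrow> j = sc i \<or> i = sc j" by (cases i; cases j) auto

definition cA :: "('a \<Rightarrow> 'a \<Rightarrow> 'a) \<Rightarrow> ('a \<times> 'a) \<times> z3 \<Rightarrow> ('a \<times> 'a) \<times> z3" where
  "cA rot z = (sg rot (fst z), sc (snd z))"

definition cB :: "('a \<times> 'a) \<times> z3 \<Rightarrow> ('a \<times> 'a) \<times> z3" where
  "cB z = (th (fst z), snd z)"

definition tau :: "('a \<times> 'a) \<times> z3 \<Rightarrow> ('a \<times> 'a) \<times> z3" where
  "tau z = (fst z, sc (snd z))"

lemma card_le3: "card {a, b, c} \<le> 3"
  by (auto simp: card_insert_if)

lemma card_le2: "card {a, b} \<le> 2"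
  by (auto simp: card_insert_if)

context cplane
begin

abbreviation "SS \<equiv> darts E \<times> (UNIV :: z3 set)"

lemma finSS: "finite SS" using finD fin_z3 by simp

lemma cardSS: "card SS = 3 * card (darts E)" by (simp add: card_cartesian_product card_z3)

lemma cA_in: "z \<in> SS \<Longrightarrow> cA rot z \<in> SS" by (auto simp: cA_def sg_in)
lemma cB_in: "z \<in> SS \<Longrightarrow> cB z \<in> SS" by (auto simp: cB_def th_in)

lemma bij_cA: "bij_betw (cA rot) SS SS"
proof (rule bij_betw_imageI)
  show "inj_on (cA rot) SS"
  proof (rule inj_onI)
    fix z z' assume z: "z \<in> SS" "z' \<in> SS" "cA rot z = cA rot z'"
    have "sg rot (fst z) = sg rot (fst z')" "sc (snd z) = sc (snd z')" using z(3) by (auto simp: cA_def)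
    moreover have "inj_on (sg rot) (darts E)" using bij_sg by (rule bij_betw_imp_inj_on)
    moreover have "fst z \<in> darts E" "fst z' \<in> darts E" using z(1,2) by auto
    ultimately have "fst z = fst z'" "snd z = snd z'" using sc_inj by (auto dest: inj_onD)
    then show "z = z'" by (simp add: prod_eq_iff)
  qed
  show "cA rot ` SS = SS"
  proof
    show "cA rot ` SS \<subseteq> SS" by (rule image_subsetI, rule cA_in)
    show "SS \<subseteq> cA rot ` SS"
    proof
      fix w assume w: "w \<in> SS"
      then have "fst w \<in> sg rot ` darts E" using bij_sg by (auto simp: bij_betw_def)
      then obtain d where d: "d \<in> darts E" "fst w = sg rot d" by auto
      have "cA rot (d, sc (sc (snd w))) = w" using d by (simp add: cA_def prod_eq_iff)
      moreover have "(d, sc (sc (snd w))) \<in> SS" using d by simp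
      ultimately show "w \<in> cA rot ` SS" by (metis image_eqI)
    qed
  qed
qed

lemma bij_cB: "bij_betw cB SS SS"
  by (rule bij_betw_byWitness[where f' = cB]) (auto simp: cB_def th_def darts_iff insert_commute)

lemma cAB: "cA rot (cB z) = (face_step rot (fst z), sc (snd z))"
  by (simp add: cA_def cB_def face_step_eq)

definition GG where "GG = steps SS (cA rot) \<union> steps SS cB"

lemma genus_app:
  "cyc SS (cA rot) + cyc SS cB + cyc SS (\<lambda>z. cA rot (cB z)) \<le> card SS + 2 * ncls SS GG"
  unfolding GG_def by (rule genus[OF finSS bij_cA bij_cB])

lemma lowA: "real (card (darts E)) \<le> real (cyc SS (cA rot))"
proof -
  have "(\<Sum>z\<in>SS. 1 / real (3::nat)) \<le> real (cyc SS (cA rot))"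
  proof (rule cyc_lower[OF finSS bij_cA])
    fix z assume z: "z \<in> SS"
    let ?T = "{z, cA rot z, cA rot (cA rot z)}"
    have "cA rot z \<in> SS" using z by (rule cA_in)
    then have "cA rot (cA rot z) \<in> SS" by (rule cA_in)
    then have "?T \<subseteq> SS" using z \<open>cA rot z \<in> SS\<close> by simp
    moreover have "cA rot (cA rot (cA rot z)) = z"
    proof -
      have "cA rot (cA rot (cA rot z)) = (sg rot (sg rot (sg rot (fst z))), sc (sc (sc (snd z))))"
        by (simp add: cA_def)
      also have "sg rot (sg rot (sg rot (fst z))) = fst z" using z by (intro sg3) auto
      finally show ?thesis by simp
    qed
    then have "\<forall>w\<in>?T. cA rot w \<in> ?T" by simp
    moreover have "card ?T \<le> 3" by (rule card_le3)
    ultimately show "\<exists>T. T \<subseteq> SS \<and> z \<in> T \<and> (\<forall>w\<in>T. cA rot w \<in> T) \<and> card T \<le> 3"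
      by (intro exI[of _ ?T]) simp
  qed simp
  then show ?thesis using cardSS by simp
qed

lemma lowB: "3 / 2 * real (card (darts E)) \<le> real (cyc SS cB)"
proof -
  have "(\<Sum>z\<in>SS. 1 / real (2::nat)) \<le> real (cyc SS cB)"
  proof (rule cyc_lower[OF finSS bij_cB])
    fix z assume z: "z \<in> SS"
    let ?T = "{z, cB z}"
    have "cB z \<in> SS" using z by (rule cB_in)
    then have "?T \<subseteq> SS" using z by simp
    moreover have "cB (cB z) = z" by (simp add: cB_def th_def)
    then have "\<forall>w\<in>?T. cB w \<in> ?T" by simp
    moreover have "card ?T \<le> 2" by (rule card_le2)
    ultimately show "\<exists>T. T \<subseteq> SS \<and> z \<in> T \<and> (\<forall>w\<in>T. cB w \<in> T) \<and> card T \<le> 2"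
      by (intro exI[of _ ?T]) simp
  qed simp
  then show ?thesis using cardSS by simp
qed

lemma lowAB: "3 * real (card (faces E rot)) \<le> real (cyc SS (\<lambda>z. cA rot (cB z)))"
proof -
  let ?L = "\<lambda>z. card (face_orbit rot (fst z))"
  let ?f = "face_step rot"
  have "(\<Sum>z\<in>SS. 1 / real (?L z)) \<le> real (cyc SS (\<lambda>z. cA rot (cB z)))"
  proof (rule cyc_lower[OF finSS])
    show "bij_betw (\<lambda>z. cA rot (cB z)) SS SS"
    proof -
      have "bij_betw (cA rot \<circ> cB) SS SS" using bij_cB bij_cA by (rule bij_betw_trans)
      then show ?thesis by (simp add: comp_def)
    qed
    fix z assume z: "z \<in> SS"
    obtain d i where di: "z = (d, i)" by (cases z)
    have d: "d \<in> darts E" using z di by simp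
    define L where "L = card (face_orbit rot d)"
    have Lf: "(?f ^^ L) d = d" unfolding L_def by (rule face_per(2)[OF d])
    have L3: "3 dvd L" unfolding L_def by (rule face3[OF d])
    have Li: "(sc ^^ L) i = i"
    proof -
      have "(sc ^^ (L mod 3)) i = (sc ^^ L) i" by (rule funpow_mod_eq) (rule sc_pow3)
      then show ?thesis using L3 by simp
    qed
    have fin_o: "finite (face_orbit rot d)" using face_per(3)[OF d] finD by (rule finite_subset)
    have "d \<in> face_orbit rot d" unfolding face_orbit_eq by (auto intro: exI[of _ 0])
    then have Lpos: "0 < L" unfolding L_def using fin_o by (auto simp: card_gt_0_iff)
    define T where "T = (\<lambda>j. ((?f ^^ j) d, (sc ^^ j) i)) ` {..<L}"
    have "T \<subseteq> SS" unfolding T_def using iter_in[OF bij_fs d] by auto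
    moreover have "z \<in> T" unfolding T_def di using Lpos by (auto intro: image_eqI[of _ _ 0])
    moreover have "\<forall>w\<in>T. cA rot (cB w) \<in> T"
    proof
      fix w assume "w \<in> T"
      then obtain j where j: "j < L" "w = ((?f ^^ j) d, (sc ^^ j) i)" unfolding T_def by auto
      have cw: "cA rot (cB w) = ((?f ^^ Suc j) d, (sc ^^ Suc j) i)" using j by (simp add: cAB)
      show "cA rot (cB w) \<in> T"
      proof (cases "Suc j = L")
        case True
        then have "cA rot (cB w) = ((?f ^^ 0) d, (sc ^^ 0) i)" using cw Lf Li by simp
        then show ?thesis unfolding T_def using Lpos by (auto intro: image_eqI[of _ _ 0])
      next
        case False
        then have "Suc j < L" using j by simp
        have "((?f ^^ Suc j) d, (sc ^^ Suc j) i) \<in> T" unfolding T_def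
          by (rule image_eqI[of _ _ "Suc j"]) (use \<open>Suc j < L\<close> in auto)
        then show ?thesis using cw by simp
      qed
    qed
    moreover have "card T \<le> L" unfolding T_def by (metis card_image_le card_lessThan finite_lessThan)
    ultimately show "\<exists>T. T \<subseteq> SS \<and> z \<in> T \<and> (\<forall>w\<in>T. cA rot (cB w) \<in> T) \<and> card T \<le> ?L z"
      using di L_def by auto
  next
    fix z assume z: "z \<in> SS"
    then have d: "fst z \<in> darts E" by auto
    have fin_o: "finite (face_orbit rot (fst z))" using face_per(3)[OF d] finD by (rule finite_subset)
    have "fst z \<in> face_orbit rot (fst z)" unfolding face_orbit_eq by (auto intro: exI[of _ 0])
    then show "0 < ?L z" using fin_o by (auto simp: card_gt_0_iff)
  qed
  moreover have "(\<Sum>z\<in>SS. 1 / real (?L z)) = 3 * real (card (faces E rot))"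
  proof -
    have "(\<Sum>z\<in>SS. 1 / real (?L z)) = (\<Sum>d\<in>darts E. \<Sum>i\<in>(UNIV :: z3 set). 1 / real (card (face_orbit rot d)))"
      by (simp only: sum.cartesian_product) (simp add: case_prod_unfold)
    also have "\<dots> = (\<Sum>d\<in>darts E. 3 * (1 / real (card (face_orbit rot d))))"
      by (simp add: card_z3)
    also have "\<dots> = 3 * (\<Sum>d\<in>darts E. 1 / real (card (face_orbit rot d)))"
      by (simp add: sum_distrib_left)
    also have "\<dots> = 3 * real (card (faces E rot))" by (simp add: faces_sum)
    finally show ?thesis .
  qed
  ultimately show ?thesis by simp
qed

lemma three_classes: "3 \<le> ncls SS GG"
proof -
  have g: "real (cyc SS (cA rot)) + real (cyc SS cB) + real (cyc SS (\<lambda>z. cA rot (cB z)))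
      \<le> real (card SS) + 2 * real (ncls SS GG)"
    using genus_app by (simp only: of_nat_add[symmetric] of_nat_mult[symmetric] of_nat_le_iff)
  have e: "real (card V) - real (card E) + real (card (faces E rot)) = 2"
    using euler by (metis of_int_of_nat_eq of_int_diff of_int_add of_int_numeral)
  have "real (card (darts E)) = 3 * real (card V)" using card_DV by simp
  moreover have "real (card (darts E)) = 2 * real (card E)" using card_DE by simp
  moreover have "real (card SS) = 3 * real (card (darts E))" using cardSS by simp
  ultimately have "6 \<le> 2 * real (ncls SS GG)" using g e lowA lowB lowAB by linarith
  then show ?thesis by simp
qed

end


context cplane
begin

abbreviation "RR \<equiv> ecl GG"

lemma GG_A: "z \<in> SS \<Longrightarrow> (z, cA rot z) \<in> RR"
  unfolding GG_def by (rule ecl_base) (auto simp: steps_def)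

lemma GG_B: "z \<in> SS \<Longrightarrow> (z, cB z) \<in> RR"
  unfolding GG_def by (rule ecl_base) (auto simp: steps_def)

lemma tau_step: "(u, v) \<in> GG \<Longrightarrow> (tau u, tau v) \<in> GG"
  by (auto simp: GG_def steps_def tau_def cA_def cB_def)

lemma tau_rel: assumes "(u, v) \<in> RR" shows "(tau u, tau v) \<in> RR"
proof -
  have "(u, v) \<in> (GG \<union> GG\<inverse>)\<^sup>*" using assms by (simp add: ecl_def)
  then show ?thesis
  proof (induction rule: rtrancl_induct)
    case base then show ?case by simp
  next
    case (step v w)
    have "(v, w) \<in> GG \<or> (w, v) \<in> GG" using step.hyps(2) by blast
    then have "(tau v, tau w) \<in> GG \<or> (tau w, tau v) \<in> GG"
    proof
      assume "(v, w) \<in> GG" then show ?thesis using tau_step by blast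
    next
      assume "(w, v) \<in> GG" then show ?thesis using tau_step by blast
    qed
    then have "(tau v, tau w) \<in> GG \<union> GG\<inverse>" by blast
    then have "(tau v, tau w) \<in> RR" unfolding ecl_def by auto
    with step.IH show ?case by (rule ecl_trans)
  qed
qed

lemma tau_pow: "(tau ^^ s) (d, i) = (d, (sc ^^ s) i)"
  by (induction s) (auto simp: tau_def)

lemma tau_pow_rel: "(u, v) \<in> RR \<Longrightarrow> ((tau ^^ s) u, (tau ^^ s) v) \<in> RR"
  by (induction s) (auto intro: tau_rel)

lemma D_ne: "darts E \<noteq> {}"
proof
  assume "darts E = {}"
  then have "card V = 0" "card E = 0" using card_DV card_DE by auto
  moreover have "faces E rot = {}" using \<open>darts E = {}\<close> by (simp add: faces_def)
  ultimately show False using euler by simp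
qed

definition d0 where "d0 = (SOME d. d \<in> darts E)"

lemma d0: "d0 \<in> darts E" unfolding d0_def using D_ne by (auto intro: someI_ex)

definition z0 where "z0 = (d0, Z0)"

definition Rch where "Rch = {d \<in> darts E. \<exists>i. (z0, (d, i)) \<in> RR}"

lemma Rch_sg: assumes "d \<in> Rch" shows "sg rot d \<in> Rch"
proof -
  obtain i where d: "d \<in> darts E" "(z0, (d, i)) \<in> RR" using assms by (auto simp: Rch_def)
  have "((d, i), cA rot (d, i)) \<in> RR" using d by (intro GG_A) auto
  then have "((d, i), (sg rot d, sc i)) \<in> RR" by (simp add: cA_def)
  then have "(z0, (sg rot d, sc i)) \<in> RR" by (rule ecl_trans[OF d(2)])
  then show ?thesis using sg_in[OF d(1)] by (auto simp: Rch_def)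
qed

lemma Rch_th: assumes "d \<in> Rch" shows "th d \<in> Rch"
proof -
  obtain i where d: "d \<in> darts E" "(z0, (d, i)) \<in> RR" using assms by (auto simp: Rch_def)
  have "((d, i), cB (d, i)) \<in> RR" using d by (intro GG_B) auto
  then have "((d, i), (th d, i)) \<in> RR" by (simp add: cB_def)
  then have "(z0, (th d, i)) \<in> RR" by (rule ecl_trans[OF d(2)])
  then show ?thesis using th_in[OF d(1)] by (auto simp: Rch_def)
qed

lemma Rch_vertex:
  assumes pu: "(p, u) \<in> Rch" and w: "w \<in> nbrs E p"
  shows "(p, w) \<in> Rch"
proof -
  have "(p, u) \<in> darts E" using pu by (simp add: Rch_def)
  then have p: "p \<in> V" "u \<in> nbrs E p" unfolding D_Sigma by auto
  obtain k where k: "(rot p ^^ k) u = w" using rot_trans[OF p w] by blast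
  have "(p, (rot p ^^ j) u) \<in> Rch" for j
  proof (induction j)
    case 0 then show ?case using pu by simp
  next
    case (Suc j)
    then have "sg rot (p, (rot p ^^ j) u) \<in> Rch" by (rule Rch_sg)
    then show ?case by (simp add: sg_def)
  qed
  from this[of k] show ?thesis using k by simp
qed

lemma Rch_all: "Rch = darts E"
proof
  show "Rch \<subseteq> darts E" by (auto simp: Rch_def)
  obtain p0 u0 where pu0: "d0 = (p0, u0)" by (cases d0)
  have d0R: "d0 \<in> Rch" unfolding Rch_def using d0 by (auto simp: z0_def intro: exI[of _ Z0])
  have p0: "p0 \<in> V" using d0 pu0 dart_V by auto
  have reach: "\<forall>w \<in> nbrs E v. (v, w) \<in> Rch" if "(p0, v) \<in> {(x, y). {x, y} \<in> E}\<^sup>*" for v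
    using that
  proof (induction rule: rtrancl_induct)
    case base then show ?case using Rch_vertex d0R pu0 by auto
  next
    case (step y z)
    have yz: "{y, z} \<in> E" using step.hyps(2) by simp
    then have "z \<in> nbrs E y" by (simp add: nbrs_def)
    then have "(y, z) \<in> Rch" using step.IH by auto
    then have "th (y, z) \<in> Rch" by (rule Rch_th)
    then have zy: "(z, y) \<in> Rch" by (simp add: th_def)
    show ?case using Rch_vertex[OF zy] by auto
  qed
  show "darts E \<subseteq> Rch"
  proof
    fix d assume d: "d \<in> darts E"
    obtain v w where vw: "d = (v, w)" by (cases d)
    have v: "v \<in> V" "w \<in> nbrs E v" using d vw unfolding D_Sigma by auto
    have "(p0, v) \<in> {(x, y). {x, y} \<in> E}\<^sup>*" using cn p0 v(1) by (simp add: connected_graph_def)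
    then show "d \<in> Rch" using reach v(2) vw by auto
  qed
qed

lemma fiber_unique:
  assumes d: "d \<in> darts E" and i: "(z0, (d, i)) \<in> RR" and j: "(z0, (d, j)) \<in> RR"
  shows "i = j"
proof (rule ccontr)
  assume ij: "i \<noteq> j"
  have dij: "((d, i), (d, j)) \<in> RR" using ecl_trans[OF ecl_sym[OF i] j] .
  have "\<exists>k. ((d, k), (d, sc k)) \<in> RR"
  proof (cases "j = sc i")
    case True then show ?thesis using dij by auto
  next
    case False
    then have "i = sc j" using z3_two[OF ij] by simp
    then show ?thesis using ecl_sym[OF dij] by auto
  qed
  then obtain k where k: "((d, k), (d, sc k)) \<in> RR" by blast
  have k2: "((d, sc k), (d, sc (sc k))) \<in> RR" using tau_rel[OF k] by (simp add: tau_def)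
  have fib: "((d, k), (d, l)) \<in> RR" for l
  proof -
    have "l = k \<or> l = sc k \<or> l = sc (sc k)" by (cases k; cases l) auto
    then show ?thesis using k ecl_trans[OF k k2] by auto
  qed
  have z0k: "(z0, (d, k)) \<in> RR" using ecl_trans[OF i ecl_sym[OF fib[of i]]] .
  have all: "(z0, w) \<in> RR" if w: "w \<in> SS" for w
  proof -
    obtain d' l where dl: "w = (d', l)" by (cases w)
    have "d' \<in> Rch" using w dl Rch_all by auto
    then obtain m where m: "(z0, (d', m)) \<in> RR" by (auto simp: Rch_def)
    obtain s where s: "(sc ^^ s) m = l" using sc_reach by blast
    have "((d', m), (d, k)) \<in> RR" using ecl_trans[OF ecl_sym[OF m] z0k] .
    then have "((tau ^^ s) (d', m), (tau ^^ s) (d, k)) \<in> RR" by (rule tau_pow_rel)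
    then have "((d', l), (d, (sc ^^ s) k)) \<in> RR" using s by (simp add: tau_pow)
    then have b: "((d, (sc ^^ s) k), (d', l)) \<in> RR" by (rule ecl_sym)
    have "((d, k), (d', l)) \<in> RR" by (rule ecl_trans[OF fib[of "(sc ^^ s) k"] b])
    then have "(z0, (d', l)) \<in> RR" by (rule ecl_trans[OF z0k])
    then show ?thesis using dl by simp
  qed
  have "(\<lambda>z. RR `` {z}) ` SS = {RR `` {z0}}"
  proof
    show "(\<lambda>z. RR `` {z}) ` SS \<subseteq> {RR `` {z0}}"
    proof
      fix C assume "C \<in> (\<lambda>z. RR `` {z}) ` SS"
      then obtain w where w: "w \<in> SS" "C = RR `` {w}" by auto
      have "RR `` {z0} = RR `` {w}" using all[OF w(1)] by (rule class_eq)
      then show "C \<in> {RR `` {z0}}" using w by simp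
    qed
    have "z0 \<in> SS" using d0 by (simp add: z0_def)
    then show "{RR `` {z0}} \<subseteq> (\<lambda>z. RR `` {z}) ` SS" by auto
  qed
  then have "ncls SS GG = 1" by (simp add: ncls_def)
  then show False using three_classes by simp
qed

definition fl where "fl d = (THE i. (z0, (d, i)) \<in> RR)"

lemma fl_rel: assumes d: "d \<in> darts E" shows "(z0, (d, fl d)) \<in> RR"
proof -
  have "d \<in> Rch" using d Rch_all by simp
  then obtain i where i: "(z0, (d, i)) \<in> RR" by (auto simp: Rch_def)
  have "\<exists>!i. (z0, (d, i)) \<in> RR" using i fiber_unique[OF d] by blast
  then show ?thesis unfolding fl_def by (rule theI')
qed

lemma fl_eq: "d \<in> darts E \<Longrightarrow> (z0, (d, i)) \<in> RR \<Longrightarrow> fl d = i"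
  using fiber_unique fl_rel by blast

lemma fl_sg: assumes d: "d \<in> darts E" shows "fl (sg rot d) = sc (fl d)"
proof -
  have "((d, fl d), cA rot (d, fl d)) \<in> RR" using d by (intro GG_A) auto
  then have "(z0, (sg rot d, sc (fl d))) \<in> RR" using ecl_trans[OF fl_rel[OF d]] by (simp add: cA_def)
  then show ?thesis using sg_in[OF d] by (rule fl_eq[rotated])
qed

lemma fl_th: assumes d: "d \<in> darts E" shows "fl (th d) = fl d"
proof -
  have "((d, fl d), cB (d, fl d)) \<in> RR" using d by (intro GG_B) auto
  then have "(z0, (th d, fl d)) \<in> RR" using ecl_trans[OF fl_rel[OF d]] by (simp add: cB_def)
  then show ?thesis using th_in[OF d] by (rule fl_eq[rotated])
qed

definition nu where "nu e = hv (fl (SOME d. d \<in> darts E \<and> {fst d, snd d} = e))"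

lemma nu_eq: assumes pu: "(p, u) \<in> darts E" shows "nu {p, u} = hv (fl (p, u))"
proof -
  define d where "d = (SOME d. d \<in> darts E \<and> {fst d, snd d} = {p, u})"
  have "\<exists>d. d \<in> darts E \<and> {fst d, snd d} = {p, u}" using pu by (intro exI[of _ "(p, u)"]) simp
  then have dd: "d \<in> darts E" "{fst d, snd d} = {p, u}" unfolding d_def by (metis (mono_tags, lifting) someI_ex)+
  have "d = (p, u) \<or> d = (u, p)" using dd(2) by (cases d) (auto simp: doubleton_eq_iff)
  then have "fl d = fl (p, u)"
  proof
    assume "d = (u, p)"
    then have "d = th (p, u)" by (simp add: th_def)
    then show ?thesis using fl_th[OF pu] by simp
  qed simp
  then show ?thesis unfolding nu_def d_def[symmetric] by simp
qed

lemma main: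
  "\<exists>\<nu> :: 'a set \<Rightarrow> nat.
           (\<forall>e\<in>E. \<nu> e \<in> {1, 2, 3}) \<and>
           (\<forall>p\<in>V. \<forall>u\<in>nbrs E p. \<nu> {p, rot p u} = \<nu> {p, u} mod 3 + 1)"
proof (intro exI[of _ nu] conjI ballI)
  fix e assume "e \<in> E"
  show "nu e \<in> {1, 2, 3}" unfolding nu_def by (rule hv_range)
next
  fix p u assume p: "p \<in> V" and u: "u \<in> nbrs E p"
  have pu: "(p, u) \<in> darts E" using p u unfolding D_Sigma by simp
  have pr: "(p, rot p u) \<in> darts E" using p rot_in[OF p u] unfolding D_Sigma by simp
  have "nu {p, rot p u} = hv (fl (p, rot p u))" using pr by (rule nu_eq)
  also have "(p, rot p u) = sg rot (p, u)" by (simp add: sg_def)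
  also have "fl (sg rot (p, u)) = sc (fl (p, u))" using pu by (rule fl_sg)
  also have "hv (sc (fl (p, u))) = hv (fl (p, u)) mod 3 + 1" by (rule hv_sc)
  also have "hv (fl (p, u)) = nu {p, u}" using pu by (rule nu_eq[symmetric])
  finally show "nu {p, rot p u} = nu {p, u} mod 3 + 1" .
qed

end


theorem proposition2p9:
  fixes V :: "'a set" and E :: "'a set set" and rot :: "'a \<Rightarrow> 'a \<Rightarrow> 'a"
  assumes "simple_graph V E"
    and "connected_graph V E"
    and "cubic V E"
    and "plane_embedding V E rot"
    and "\<forall>F\<in>faces E rot. 3 dvd card F"
  shows "\<exists>\<nu> :: 'a set \<Rightarrow> nat.
           (\<forall>e\<in>E. \<nu> e \<in> {1, 2, 3}) \<and>
           (\<forall>p\<in>V. \<forall>u\<in>nbrs E p. \<nu> {p, rot p u} = \<nu> {p, u} mod 3 + 1)"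
proof -
  interpret cplane V E rot using assms by (simp add: cplane_def)
  show ?thesis by (rule main)
qed

end
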